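(* Let $\Phi$ be an irreducible root system with ambient real vector space $\mathbb R\Phi$. Then $\Phi$ is not contained in the union of two hyperplanes (linear subspaces of codimension $1$) of $\mathbb R\Phi$. Moreover, if $H\le\mathbb R\Phi$ is a hyperplane and $\alpha\in\Phi\cap H$, then $\alpha$ has a neighbor in $\Phi\setminus H$.
   Context: Root systems are crystallographic, possibly non-reduced (components of type $\mathsf{BC}_\ell$ are allowed). Two roots $\alpha,\beta$ are called neighbors if they are linearly independent, non-orthogonal, and no root lies in the open cone $\mathbb R_{>0}\alpha+\mathbb R_{>0}\beta$. *)

theory Defs
  imports "HOL-Analysis.Analysis"
begin

text \<open>Roots live in a Euclidean space 'a; the ambient space of Phi is span Phi.
  Crystallographic, possibly non-reduced root systems (no condition on multiples).\<close>

definition refl_root :: "'a::euclidean_space \<Rightarrow> 'a \<Rightarrow> 'a" where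
  "refl_root \<alpha> x = x - (2 * (x \<bullet> \<alpha>) / (\<alpha> \<bullet> \<alpha>)) *\<^sub>R \<alpha>"

definition root_system :: "'a::euclidean_space set \<Rightarrow> bool" where
  "root_system \<Phi> \<longleftrightarrow> finite \<Phi> \<and> 0 \<notin> \<Phi> \<and>
     (\<forall>\<alpha>\<in>\<Phi>. \<forall>\<beta>\<in>\<Phi>. refl_root \<alpha> \<beta> \<in> \<Phi>) \<and>
     (\<forall>\<alpha>\<in>\<Phi>. \<forall>\<beta>\<in>\<Phi>. 2 * (\<beta> \<bullet> \<alpha>) / (\<alpha> \<bullet> \<alpha>) \<in> \<int>)"

definition irreducible_rs :: "'a::euclidean_space set \<Rightarrow> bool" where
  "irreducible_rs \<Phi> \<longleftrightarrow> \<Phi> \<noteq> {} \<and>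
     \<not> (\<exists>A B. A \<noteq> {} \<and> B \<noteq> {} \<and> A \<union> B = \<Phi> \<and> A \<inter> B = {} \<and>
            (\<forall>a\<in>A. \<forall>b\<in>B. a \<bullet> b = 0))"

definition hyperplane_of :: "'a::euclidean_space set \<Rightarrow> 'a set \<Rightarrow> bool" where
  "hyperplane_of V H \<longleftrightarrow> subspace H \<and> H \<subseteq> V \<and> dim H + 1 = dim V"

definition root_neighbors :: "'a::euclidean_space set \<Rightarrow> 'a \<Rightarrow> 'a \<Rightarrow> bool" where
  "root_neighbors \<Phi> \<alpha> \<beta> \<longleftrightarrow> \<alpha> \<noteq> \<beta> \<and> independent {\<alpha>, \<beta>} \<and> \<alpha> \<bullet> \<beta> \<noteq> 0 \<and>
     \<not> (\<exists>\<gamma>\<in>\<Phi>. \<exists>a b. a > 0 \<and> b > 0 \<and> \<gamma> = a *\<^sub>R \<alpha> + b *\<^sub>R \<beta>)"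

end

theory Submission imports Defs begin

lemma refl_in:
  assumes "root_system \<Phi>" "a \<in> \<Phi>" "b \<in> \<Phi>"
  shows "b - (2 * (b \<bullet> a) / (a \<bullet> a)) *\<^sub>R a \<in> \<Phi>"
  using assms unfolding root_system_def refl_root_def by blast

lemma cover2:
  fixes \<Phi> :: "'a::euclidean_space set"
  assumes rs: "root_system \<Phi>" and irr: "irreducible_rs \<Phi>"
    and s1: "subspace H1" and s2: "subspace H2"
    and cov: "\<Phi> \<subseteq> H1 \<union> H2" and n1: "\<not> \<Phi> \<subseteq> H1" and n2: "\<not> \<Phi> \<subseteq> H2"
  shows False
proof -
  have nz: "\<And>x. x \<in> \<Phi> \<Longrightarrow> x \<bullet> x \<noteq> 0" using rs unfolding root_system_def by auto
  define A where "A = \<Phi> - H1"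
  define L where "L = span A"
  have aux: "a \<in> H" if "subspace H" "c *\<^sub>R a \<in> H" "c \<noteq> 0" for H and a :: 'a and c :: real
  proof -
    have "(1/c) *\<^sub>R (c *\<^sub>R a) \<in> H" using that subspace_scale by blast
    thus ?thesis using that by simp
  qed
  have f1: "a \<bullet> b = 0" if a: "a \<in> A" and b: "b \<in> \<Phi>" "b \<notin> H2" for a b
  proof (rule ccontr)
    assume ab: "a \<bullet> b \<noteq> 0"
    define c where "c = 2 * (b \<bullet> a) / (a \<bullet> a)"
    have c0: "c \<noteq> 0" using ab nz[of a] a unfolding c_def A_def by (simp add: inner_commute)
    define r where "r = b - c *\<^sub>R a"
    have r: "r \<in> \<Phi>" using refl_in[OF rs, of a b] a b unfolding r_def c_def A_def by auto
    have aH2: "a \<in> H2" and aH1: "a \<notin> H1" using a cov unfolding A_def by auto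
    have bH1: "b \<in> H1" using b cov by auto
    show False
    proof (cases "r \<in> H1")
      case True
      have "c *\<^sub>R a \<in> H1" using subspace_diff[OF s1 bH1 True] unfolding r_def by simp
      thus False using aux[OF s1 _ c0] aH1 by blast
    next
      case False
      hence "r \<in> H2" using r cov by auto
      hence "r + c *\<^sub>R a \<in> H2" using subspace_add[OF s2] subspace_scale[OF s2 aH2] by blast
      thus False using b unfolding r_def by simp
    qed
  qed
  have f2: "\<gamma> \<in> L \<or> (\<forall>a\<in>A. \<gamma> \<bullet> a = 0)" if g: "\<gamma> \<in> \<Phi>" for \<gamma>
  proof (rule ccontr)
    assume "\<not> ?thesis"
    then obtain a where a: "a \<in> A" "\<gamma> \<bullet> a \<noteq> 0" and gL: "\<gamma> \<notin> L" by auto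
    have "\<gamma> \<in> H1" using g gL span_base unfolding L_def A_def by blast
    define c where "c = 2 * (\<gamma> \<bullet> a) / (a \<bullet> a)"
    have c0: "c \<noteq> 0" using a nz[of a] unfolding c_def A_def by simp
    define r where "r = \<gamma> - c *\<^sub>R a"
    have r: "r \<in> \<Phi>" using refl_in[OF rs, of a \<gamma>] a g unfolding r_def c_def A_def by auto
    have aH1: "a \<notin> H1" using a unfolding A_def by auto
    have "r \<notin> H1"
    proof
      assume "r \<in> H1"
      have "c *\<^sub>R a \<in> H1" using subspace_diff[OF s1 \<open>\<gamma> \<in> H1\<close> \<open>r \<in> H1\<close>] unfolding r_def by simp
      thus False using aux[OF s1 _ c0] aH1 by blast
    qed
    hence "r \<in> L" using r span_base unfolding L_def A_def by blast
    moreover have "c *\<^sub>R a \<in> L" using a span_base span_scale unfolding L_def by blast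
    ultimately have "r + c *\<^sub>R a \<in> L" unfolding L_def using span_add by blast
    thus False using gL unfolding r_def by simp
  qed
  have orthL: "\<gamma> \<bullet> x = 0" if "\<forall>a\<in>A. \<gamma> \<bullet> a = 0" "x \<in> L" for \<gamma> x
    using orthogonal_to_span[of x A \<gamma>] that unfolding L_def orthogonal_def by blast
  obtain b where b: "b \<in> \<Phi>" "b \<notin> H2" using n2 by auto
  have bA: "\<forall>a\<in>A. b \<bullet> a = 0" using f1 b by (simp add: inner_commute)
  have bL: "b \<notin> L" using orthL[OF bA, of b] nz[OF b(1)] by auto
  obtain a where a: "a \<in> A" using n1 unfolding A_def by auto
  have aL: "a \<in> L" using a span_base unfolding L_def by blast
  have "\<exists>P Q. P \<noteq> {} \<and> Q \<noteq> {} \<and> P \<union> Q = \<Phi> \<and> P \<inter> Q = {} \<and> (\<forall>p\<in>P. \<forall>q\<in>Q. p \<bullet> q = 0)"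
  proof (intro exI conjI)
    show "\<Phi> \<inter> L \<noteq> {}" using a aL unfolding A_def by auto
    show "\<Phi> - L \<noteq> {}" using b bL by auto
    show "\<forall>p\<in>\<Phi> \<inter> L. \<forall>q\<in>\<Phi> - L. p \<bullet> q = 0"
    proof (intro ballI)
      fix p q assume p: "p \<in> \<Phi> \<inter> L" and q: "q \<in> \<Phi> - L"
      have "\<forall>a\<in>A. q \<bullet> a = 0" using f2[of q] q by auto
      thus "p \<bullet> q = 0" using orthL[of q p] p by (simp add: inner_commute)
    qed
  qed auto
  thus False using irr unfolding irreducible_rs_def by blast
qed

lemma neighbor:
  fixes \<Phi> :: "'a::euclidean_space set"
  assumes rs: "root_system \<Phi>" and sH: "subspace H"
    and al: "\<alpha> \<in> \<Phi>" "\<alpha> \<in> H" and b0: "\<beta>0 \<in> \<Phi>" "\<beta>0 \<notin> H" and ab: "\<beta>0 \<bullet> \<alpha> \<noteq> 0"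
  shows "\<exists>\<beta>\<in>\<Phi> - H. root_neighbors \<Phi> \<alpha> \<beta>"
proof -
  have a0: "\<alpha> \<noteq> 0" using rs al unfolding root_system_def by auto
  have aa: "\<alpha> \<bullet> \<alpha> > 0" using a0 by simp
  have aux: "a \<in> H" if "c *\<^sub>R a \<in> H" "c \<noteq> 0" for a :: 'a and c :: real
  proof -
    have "(1/c) *\<^sub>R (c *\<^sub>R a) \<in> H" using that sH subspace_scale by blast
    thus ?thesis using that by simp
  qed
  have notb: "c *\<^sub>R \<beta>0 \<notin> H" if "c \<noteq> 0" for c using aux b0 that by blast
  have uniq: "x = x' \<and> y = y'" if e: "x *\<^sub>R \<alpha> + y *\<^sub>R \<beta>0 = x' *\<^sub>R \<alpha> + y' *\<^sub>R \<beta>0" for x y x' y'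
  proof -
    have e2: "(y - y') *\<^sub>R \<beta>0 = (x' - x) *\<^sub>R \<alpha>" using e by (simp add: algebra_simps)
    have "(x' - x) *\<^sub>R \<alpha> \<in> H" using sH al subspace_scale by blast
    hence yy: "y = y'" using notb[of "y - y'"] e2 by auto
    hence "(x' - x) *\<^sub>R \<alpha> = 0" using e2 by simp
    thus ?thesis using yy a0 by simp
  qed
  define f where "f = (\<lambda>p::real\<times>real. fst p *\<^sub>R \<alpha> + snd p *\<^sub>R \<beta>0)"
  define S where "S = {p. f p \<in> \<Phi> \<and> snd p > 0}"
  have inj: "inj_on f S" unfolding inj_on_def f_def using uniq by (simp add: prod_eq_iff)
  have fin: "finite S"
  proof (rule finite_imageD[OF _ inj])
    show "finite (f ` S)" using rs unfolding root_system_def S_def by (auto intro: finite_subset)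
  qed
  have S01: "(0, 1) \<in> S" using b0 unfolding S_def f_def by simp
  define g where "g = (\<lambda>p::real\<times>real. fst p / snd p)"
  define m where "m = Max (g ` S)"
  have mge: "g p \<le> m" if "p \<in> S" for p unfolding m_def using fin that by simp
  have "m \<in> g ` S" unfolding m_def using fin S01 by (intro Max_in) auto
  then obtain xs ys where pS: "(xs, ys) \<in> S" and mdef: "m = xs / ys" unfolding g_def by auto
  have ys: "ys > 0" and \<gamma>\<Phi>: "xs *\<^sub>R \<alpha> + ys *\<^sub>R \<beta>0 \<in> \<Phi>" using pS unfolding S_def f_def by auto
  define \<gamma> where "\<gamma> = xs *\<^sub>R \<alpha> + ys *\<^sub>R \<beta>0"
  have gH: "\<gamma> \<notin> H"
  proof
    assume "\<gamma> \<in> H"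
    moreover have "xs *\<^sub>R \<alpha> \<in> H" using sH al subspace_scale by blast
    ultimately have "\<gamma> - xs *\<^sub>R \<alpha> \<in> H" using sH subspace_diff by blast
    thus False using notb[of ys] ys unfolding \<gamma>_def by simp
  qed
  have g0: "\<gamma> \<noteq> 0" using gH sH subspace_0 by blast
  have ind: "\<alpha> \<notin> span {\<gamma>}"
  proof
    assume "\<alpha> \<in> span {\<gamma>}"
    then obtain c where "\<alpha> = c *\<^sub>R \<gamma>" by (auto simp: span_singleton)
    hence "1 *\<^sub>R \<alpha> + 0 *\<^sub>R \<beta>0 = (c * xs) *\<^sub>R \<alpha> + (c * ys) *\<^sub>R \<beta>0"
      unfolding \<gamma>_def by (simp add: algebra_simps)
    from uniq[OF this] ys show False by auto
  qed
  have neq: "\<alpha> \<noteq> \<gamma>" using ind span_base by blast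
  have indep: "independent {\<alpha>, \<gamma>}"
    using ind g0 by (simp add: independent_insert neq)
  have m0: "0 \<le> m" using mge[OF S01] unfolding g_def by simp
  define k where "k = 2 * (\<beta>0 \<bullet> \<alpha>) / (\<alpha> \<bullet> \<alpha>)"
  have "\<beta>0 - k *\<^sub>R \<alpha> \<in> \<Phi>" using refl_in[OF rs al(1) b0(1)] unfolding k_def .
  hence "(-k, 1) \<in> S" unfolding S_def f_def by (simp add: algebra_simps)
  hence mk: "-k \<le> m" using mge unfolding g_def by fastforce
  have orth: "\<alpha> \<bullet> \<gamma> \<noteq> 0"
  proof
    assume "\<alpha> \<bullet> \<gamma> = 0"
    hence "xs * (\<alpha> \<bullet> \<alpha>) + ys * (\<beta>0 \<bullet> \<alpha>) = 0" unfolding \<gamma>_def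
      by (simp add: inner_add_right inner_commute)
    hence "\<beta>0 \<bullet> \<alpha> = - m * (\<alpha> \<bullet> \<alpha>)" using ys unfolding mdef by (simp add: field_simps)
    hence "k = -2 * m" unfolding k_def using aa by simp
    hence "m = 0" using mk m0 by simp
    hence "\<beta>0 \<bullet> \<alpha> = 0" using \<open>\<beta>0 \<bullet> \<alpha> = - m * (\<alpha> \<bullet> \<alpha>)\<close> by simp
    thus False using ab by simp
  qed
  have cone: "\<not> (\<exists>\<delta>\<in>\<Phi>. \<exists>a b. a > 0 \<and> b > 0 \<and> \<delta> = a *\<^sub>R \<alpha> + b *\<^sub>R \<gamma>)"
  proof
    assume "\<exists>\<delta>\<in>\<Phi>. \<exists>a b. a > 0 \<and> b > 0 \<and> \<delta> = a *\<^sub>R \<alpha> + b *\<^sub>R \<gamma>"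
    then obtain a b where ab: "a > 0" "b > 0" "a *\<^sub>R \<alpha> + b *\<^sub>R \<gamma> \<in> \<Phi>" by auto
    have "a *\<^sub>R \<alpha> + b *\<^sub>R \<gamma> = f (a + b * xs, b * ys)"
      unfolding f_def \<gamma>_def by (simp add: algebra_simps)
    hence "(a + b * xs, b * ys) \<in> S" using ab ys unfolding S_def by simp
    hence "(a + b * xs) / (b * ys) \<le> xs / ys" using mge mdef unfolding g_def by fastforce
    hence "a + b * xs \<le> (xs / ys) * (b * ys)" using ab ys by (simp add: divide_le_eq)
    also have "\<dots> = b * xs" using ys by simp
    finally show False using ab by simp
  qed
  show ?thesis
    apply (rule bexI[of _ \<gamma>])
    using neq indep orth cone gH \<gamma>\<Phi> unfolding root_neighbors_def \<gamma>_def by auto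
qed

theorem lemma1:
  fixes \<Phi> :: "'a::euclidean_space set"
  assumes "root_system \<Phi>" and "irreducible_rs \<Phi>"
  shows "(\<forall>H1 H2. hyperplane_of (span \<Phi>) H1 \<and> hyperplane_of (span \<Phi>) H2
              \<longrightarrow> \<not> \<Phi> \<subseteq> H1 \<union> H2)
       \<and> (\<forall>H \<alpha>. hyperplane_of (span \<Phi>) H \<and> \<alpha> \<in> \<Phi> \<inter> H
              \<longrightarrow> (\<exists>\<beta>\<in>\<Phi> - H. root_neighbors \<Phi> \<alpha> \<beta>))"
proof -
  have nsub: "\<not> \<Phi> \<subseteq> H" if "hyperplane_of (span \<Phi>) H" for H
  proof
    assume "\<Phi> \<subseteq> H"
    hence "span \<Phi> \<subseteq> H" using span_minimal that unfolding hyperplane_of_def by blast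
    hence "dim (span \<Phi>) \<le> dim H" by (rule dim_subset)
    thus False using that unfolding hyperplane_of_def by simp
  qed
  show ?thesis
  proof (intro conjI allI impI)
    fix H1 H2 assume h: "hyperplane_of (span \<Phi>) H1 \<and> hyperplane_of (span \<Phi>) H2"
    show "\<not> \<Phi> \<subseteq> H1 \<union> H2"
      using cover2[OF assms, of H1 H2] h nsub unfolding hyperplane_of_def by blast
  next
    fix H \<alpha> assume h: "hyperplane_of (span \<Phi>) H \<and> \<alpha> \<in> \<Phi> \<inter> H"
    have sH: "subspace H" using h unfolding hyperplane_of_def by simp
    have a0: "\<alpha> \<bullet> \<alpha> \<noteq> 0" using h assms(1) unfolding root_system_def by auto
    have "\<not> \<Phi> \<subseteq> H \<union> {x. x \<bullet> \<alpha> = 0}"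
    proof
      assume c: "\<Phi> \<subseteq> H \<union> {x. x \<bullet> \<alpha> = 0}"
      show False
      proof (rule cover2[OF assms sH subspace_hyperplane2 c])
        show "\<not> \<Phi> \<subseteq> H" using nsub h by blast
        show "\<not> \<Phi> \<subseteq> {x. x \<bullet> \<alpha> = 0}" using h a0 by auto
      qed
    qed
    then obtain \<beta>0 where "\<beta>0 \<in> \<Phi>" "\<beta>0 \<notin> H" "\<beta>0 \<bullet> \<alpha> \<noteq> 0" by auto
    thus "\<exists>\<beta>\<in>\<Phi> - H. root_neighbors \<Phi> \<alpha> \<beta>"
      using neighbor[OF assms(1) sH] h by blast
  qed
qed

end
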